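(* Let $a,a',b,b':\mathbb{Z}\to\mathbb{C}$ be functions none of which is identically zero, and suppose $a(\mathbb{K})fb(\mathbb{K})=a'(\mathbb{K})fb'(\mathbb{K})$ for all $f\in\mathcal{D}$. Then there is a nonzero constant $\mu$ such that $a'(k)=\mu a(k)$ and $b'(k)=\frac1\mu b(k)$ for all $k\in\mathbb{Z}$.
   Context: Let $\{E_k\}$ be the canonical basis of $\ell^2(\mathbb{Z})$, $UE_k=E_{k+1}$, $\mathbb{K}E_k=kE_k$, and $a(\mathbb{K})E_k=a(k)E_k$ for $a:\mathbb{Z}\to\mathbb{C}$. $\mathcal{D}$ is the space of finite sums $f=\sum_nU^nf_n(\mathbb{K})$ with each $f_n:\mathbb{Z}\to\mathbb{C}$ finitely supported (operators on $\ell^2(\mathbb{Z})$ with finitely many nonzero matrix entries); the products are operator products. *)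

theory Defs
  imports Complex_Main
begin

(* Operators are modelled by their action on sequences x :: int => complex
   (coordinates w.r.t. the canonical basis E_k of l^2(Z)). *)

(* U^n, where U E_k = E_(k+1); so (U^n x)(k) = x(k - n). *)
definition Upow :: "int \<Rightarrow> (int \<Rightarrow> complex) \<Rightarrow> (int \<Rightarrow> complex)" where
  "Upow n x = (\<lambda>k. x (k - n))"

definition mulK :: "(int \<Rightarrow> complex) \<Rightarrow> (int \<Rightarrow> complex) \<Rightarrow> (int \<Rightarrow> complex)" where
  "mulK a x = (\<lambda>k. a k * x k)"

definition calD :: "((int \<Rightarrow> complex) \<Rightarrow> (int \<Rightarrow> complex)) set" where
  "calD = {T. \<exists>N :: int set. \<exists>fs :: int \<Rightarrow> int \<Rightarrow> complex.
              finite N \<and> (\<forall>n\<in>N. finite {k. fs n k \<noteq> 0}) \<and>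
              T = (\<lambda>x k. \<Sum>n\<in>N. Upow n (mulK (fs n) x) k)}"

end

theory Submission
  imports Defs
begin

lemma key:
  fixes a a' b b' :: "int \<Rightarrow> complex"
  assumes "\<forall>f\<in>calD. mulK a \<circ> f \<circ> mulK b = mulK a' \<circ> f \<circ> mulK b'"
  shows "a i * b j = a' i * b' j"
proof -
  define T :: "(int \<Rightarrow> complex) \<Rightarrow> (int \<Rightarrow> complex)" where
    "T = (\<lambda>x k. if k = i then x j else 0)"
  have "T \<in> calD"
    unfolding calD_def
  proof (intro CollectI exI conjI)
    show "finite {i - j}" by simp
    show "\<forall>n\<in>{i - j}. finite {k. (\<lambda>n k. if k = j then 1 else (0::complex)) n k \<noteq> 0}" by simp
    show "T = (\<lambda>x k. \<Sum>n\<in>{i - j}. Upow n (mulK ((\<lambda>n k. if k = j then 1 else (0::complex)) n) x) k)"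
      unfolding T_def Upow_def mulK_def by (rule ext, rule ext) auto
  qed
  with assms have "mulK a \<circ> T \<circ> mulK b = mulK a' \<circ> T \<circ> mulK b'" by blast
  then have "(mulK a \<circ> T \<circ> mulK b) (\<lambda>k. if k = j then 1 else 0) i
           = (mulK a' \<circ> T \<circ> mulK b') (\<lambda>k. if k = j then 1 else 0) i" by simp
  then show ?thesis unfolding T_def mulK_def by simp
qed

theorem mainTheorem17:
  fixes a a' b b' :: "int \<Rightarrow> complex"
  assumes "a \<noteq> (\<lambda>_. 0)" and "a' \<noteq> (\<lambda>_. 0)"
    and "b \<noteq> (\<lambda>_. 0)" and "b' \<noteq> (\<lambda>_. 0)"
    and "\<forall>f\<in>calD. mulK a \<circ> f \<circ> mulK b = mulK a' \<circ> f \<circ> mulK b'"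
  shows "\<exists>\<mu>::complex. \<mu> \<noteq> 0 \<and> (\<forall>k. a' k = \<mu> * a k \<and> b' k = (1 / \<mu>) * b k)"
proof -
  note K = key[OF assms(5)]
  obtain i0 where i0: "a i0 \<noteq> 0" using assms(1) by auto
  obtain j0 where j0: "b j0 \<noteq> 0" using assms(3) by auto
  have e: "a i0 * b j0 = a' i0 * b' j0" by (rule K)
  have ne: "a' i0 \<noteq> 0" "b' j0 \<noteq> 0" using e i0 j0 by auto
  define \<mu> where "\<mu> = a' i0 / a i0"
  have mu: "\<mu> = b j0 / b' j0" unfolding \<mu>_def using e i0 ne
    by (simp add: field_simps)
  show ?thesis
  proof (intro exI conjI allI)
    show "\<mu> \<noteq> 0" unfolding \<mu>_def using i0 ne by simp
  next
    fix k
    have "a k * b j0 = a' k * b' j0" by (rule K)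
    then show "a' k = \<mu> * a k" unfolding mu using ne by (simp add: field_simps)
  next
    fix k
    have "a i0 * b k = a' i0 * b' k" by (rule K)
    then show "b' k = (1 / \<mu>) * b k" unfolding \<mu>_def using ne i0 by (simp add: field_simps)
  qed
qed

end
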